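(* Assume there are constants $0<\delta\le M$ with $-M\le\Delta(t)\le-\delta$ for all $t\in[0,T_1]$. Then for each $t\in[0,T_1]$ the map $z\mapsto\tilde w(t,z)$ is convex on $(0,\infty)$.
   Context: Setting: a filtered probability space with the usual conditions carrying a standard Brownian motion $B$; $0<T_1<T<\infty$; constants $r,\mu,\sigma,\rho,\mu_w,\sigma_w,\alpha,\beta>0$, $\kappa=(\mu-r)/\sigma$; $\xi(t)=\exp(-\kappa B(t)-(\kappa^2/2+r)t)$, $\xi^t(s)=\xi(s)/\xi(t)$; $\mathcal W^{t,w}(s)=w\exp((\mu_w-\sigma_w^2/2)(s-t)+\sigma_w(B(s)-B(t)))$; $\vartheta=-r+\mu_w-\kappa\sigma_w<0$; $q(s)=(e^{\vartheta(T_1-s)}-1)/\vartheta$; $p^T(s)=\int_s^T e^{(\alpha-\beta-r)(u-s)}du$, $\mu^T=1+\alpha p^T$; $Y^{t,y}(s)=ye^{\rho(s-t)}\xi^t(s)$. Power utilities: $\gamma>0,\gamma\neq1$, $K:[0,T]\to(0,\infty)$ smooth, $U_1(t,x)=x^{1-\gamma}/(1-\gamma)$, $U_2(t,x)=K(t)x^{1-\gamma}/(1-\gamma)$; $\tilde\gamma=(1-\gamma)/\gamma$; $\Delta(t)=(1-K(t)^{1/\gamma})/\tilde\gamma$. $\hat V_i(t,y)=\sup_{c>0}\{U_i(t,c)-y\mu^T(t)c\}$; $\tilde V(t,y)=\mathbb E\int_t^Te^{-\rho(u-t)}\hat V_2(u,Y^{t,y}(u))du$. Measure change: $\mathcal E(t)=\exp(-\frac12(\sigma_w-\kappa)^2t+(\sigma_w-\kappa)B(t))$,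 $d\tilde{\mathbb P}=\mathcal E(T_1)d\mathbb P$. For $z>0$, $Z^{t,z}(s)=z\,(Y^{t,1}(s))^{1/(1-\gamma)}(\mathcal W^{t,1}(s))^{\gamma/(1-\gamma)}$. Reduced problem $\tilde w(t,z)=\sup_{\tau}\tilde{\mathbb E}\big[\int_t^\tau e^{\vartheta(u-t)}\hat V_1(u,Z^{t,z}(u))du+e^{\vartheta(\tau-t)}(\tilde V(\tau,Z^{t,z}(\tau))-q(\tau))\big]$ over stopping times $t\le\tau\le T_1$. *)

theory Defs
  imports "HOL-Probability.Probability"
begin

text \<open>Time index is real; only nonnegative times matter. The filtration F is a family of
  sub-sg-algebras (as measures on the common space) of M.\<close>

definition usual_filtered_space :: "'a measure \<Rightarrow> (real \<Rightarrow> 'a measure) \<Rightarrow> bool" where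
  "usual_filtered_space M F \<longleftrightarrow>
     prob_space M \<and> filtration (space M) F \<and> (\<forall>s. sets (F s) \<subseteq> sets M) \<and>
     complete_measure M \<and> null_sets M \<subseteq> sets (F 0) \<and>
     (\<forall>t\<ge>0. sets (F t) = (\<Inter>s\<in>{t<..}. sets (F s)))"

definition brownian_motion :: "'a measure \<Rightarrow> (real \<Rightarrow> 'a measure) \<Rightarrow> (real \<Rightarrow> 'a \<Rightarrow> real) \<Rightarrow> bool" where
  "brownian_motion M F B \<longleftrightarrow>
     (\<forall>\<omega>\<in>space M. B 0 \<omega> = 0 \<and> continuous_on {0..} (\<lambda>s. B s \<omega>)) \<and>
     (\<forall>s\<ge>0. B s \<in> borel_measurable (F s)) \<and>
     (\<forall>s u. 0 \<le> s \<and> s < u \<longrightarrow>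
        distributed M lborel (\<lambda>\<omega>. B u \<omega> - B s \<omega>)
          (\<lambda>x. ennreal (normal_density 0 (sqrt (u - s)) x)) \<and>
        (\<forall>A\<in>sets (F s). \<forall>C\<in>sets borel.
           measure M (A \<inter> ((\<lambda>\<omega>. B u \<omega> - B s \<omega>) -` C \<inter> space M)) =
           measure M A * measure M ((\<lambda>\<omega>. B u \<omega> - B s \<omega>) -` C \<inter> space M)))"

definition smooth_on_interval :: "real set \<Rightarrow> (real \<Rightarrow> real) \<Rightarrow> bool" where
  "smooth_on_interval S f \<longleftrightarrow>
     (\<exists>D :: nat \<Rightarrow> real \<Rightarrow> real. D 0 = f \<and>
        (\<forall>n. \<forall>x\<in>S. (D n has_real_derivative D (Suc n) x) (at x within S)))"

definition kappa :: "real \<Rightarrow> real \<Rightarrow> real \<Rightarrow> real" where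
  "kappa r mu sg = (mu - r) / sg"

definition xi :: "real \<Rightarrow> real \<Rightarrow> (real \<Rightarrow> 'a \<Rightarrow> real) \<Rightarrow> real \<Rightarrow> 'a \<Rightarrow> real" where
  "xi r k B t \<omega> = exp (- k * B t \<omega> - (k\<^sup>2 / 2 + r) * t)"

definition Wproc :: "real \<Rightarrow> real \<Rightarrow> (real \<Rightarrow> 'a \<Rightarrow> real) \<Rightarrow> real \<Rightarrow> real \<Rightarrow> real \<Rightarrow> 'a \<Rightarrow> real" where
  "Wproc muw sigmaw B t w s \<omega> =
     w * exp ((muw - sigmaw\<^sup>2 / 2) * (s - t) + sigmaw * (B s \<omega> - B t \<omega>))"

definition vartheta :: "real \<Rightarrow> real \<Rightarrow> real \<Rightarrow> real \<Rightarrow> real" where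
  "vartheta r muw k sigmaw = - r + muw - k * sigmaw"

definition qfun :: "real \<Rightarrow> real \<Rightarrow> real \<Rightarrow> real" where
  "qfun th T1 s = (exp (th * (T1 - s)) - 1) / th"

definition pT :: "real \<Rightarrow> real \<Rightarrow> real \<Rightarrow> real \<Rightarrow> real \<Rightarrow> real" where
  "pT alpha beta r T s = integral {s..T} (\<lambda>u. exp ((alpha - beta - r) * (u - s)))"

definition muT :: "real \<Rightarrow> real \<Rightarrow> real \<Rightarrow> real \<Rightarrow> real \<Rightarrow> real" where
  "muT alpha beta r T s = 1 + alpha * pT alpha beta r T s"

definition Yproc :: "real \<Rightarrow> real \<Rightarrow> real \<Rightarrow> (real \<Rightarrow> 'a \<Rightarrow> real) \<Rightarrow> real \<Rightarrow> real \<Rightarrow> real \<Rightarrow> 'a \<Rightarrow> real" where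
  "Yproc rho r k B t y s \<omega> = y * exp (rho * (s - t)) * (xi r k B s \<omega> / xi r k B t \<omega>)"

definition U1 :: "real \<Rightarrow> real \<Rightarrow> real \<Rightarrow> real" where
  "U1 gamma t x = x powr (1 - gamma) / (1 - gamma)"

definition U2 :: "real \<Rightarrow> (real \<Rightarrow> real) \<Rightarrow> real \<Rightarrow> real \<Rightarrow> real" where
  "U2 gamma K t x = K t * x powr (1 - gamma) / (1 - gamma)"

definition gamma_tilde :: "real \<Rightarrow> real" where
  "gamma_tilde gamma = (1 - gamma) / gamma"

definition Delta :: "real \<Rightarrow> (real \<Rightarrow> real) \<Rightarrow> real \<Rightarrow> real" where
  "Delta gamma K t = (1 - K t powr (1 / gamma)) / gamma_tilde gamma"

definition Vhat :: "(real \<Rightarrow> real \<Rightarrow> real) \<Rightarrow> (real \<Rightarrow> real) \<Rightarrow> real \<Rightarrow> real \<Rightarrow> real" where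
  "Vhat U m t y = (SUP c\<in>{0<..}. U t c - y * m t * c)"

definition Vtilde :: "'a measure \<Rightarrow> (real \<Rightarrow> 'a \<Rightarrow> real) \<Rightarrow> real \<Rightarrow> real \<Rightarrow> real \<Rightarrow> real \<Rightarrow> real
    \<Rightarrow> real \<Rightarrow> real \<Rightarrow> (real \<Rightarrow> real) \<Rightarrow> real \<Rightarrow> real \<Rightarrow> real \<Rightarrow> real" where
  "Vtilde M B r mu sg rho alpha beta gamma K T t y =
     (\<integral>\<omega>. (LINT u:{t..T}|lborel.
         exp (- rho * (u - t)) *
         Vhat (U2 gamma K) (muT alpha beta r T) u
              (Yproc rho r (kappa r mu sg) B t y u \<omega>)) \<partial>M)"

definition calE :: "real \<Rightarrow> real \<Rightarrow> (real \<Rightarrow> 'a \<Rightarrow> real) \<Rightarrow> real \<Rightarrow> 'a \<Rightarrow> real" where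
  "calE sigmaw k B t \<omega> = exp (- (1/2) * (sigmaw - k)\<^sup>2 * t + (sigmaw - k) * B t \<omega>)"

definition Ptilde :: "'a measure \<Rightarrow> (real \<Rightarrow> 'a \<Rightarrow> real) \<Rightarrow> real \<Rightarrow> real \<Rightarrow> real \<Rightarrow> 'a measure" where
  "Ptilde M B sigmaw k T1 = density M (\<lambda>\<omega>. ennreal (calE sigmaw k B T1 \<omega>))"

definition Zproc :: "real \<Rightarrow> real \<Rightarrow> real \<Rightarrow> real \<Rightarrow> real \<Rightarrow> real \<Rightarrow> real \<Rightarrow> (real \<Rightarrow> 'a \<Rightarrow> real)
    \<Rightarrow> real \<Rightarrow> real \<Rightarrow> real \<Rightarrow> 'a \<Rightarrow> real" where
  "Zproc r mu sg rho muw sigmaw gamma B t z s \<omega> =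
     z * (Yproc rho r (kappa r mu sg) B t 1 s \<omega>) powr (1 / (1 - gamma))
       * (Wproc muw sigmaw B t 1 s \<omega>) powr (gamma / (1 - gamma))"

definition stopping_times_between :: "'a measure \<Rightarrow> (real \<Rightarrow> 'a measure) \<Rightarrow> real \<Rightarrow> real \<Rightarrow> ('a \<Rightarrow> real) set" where
  "stopping_times_between M F t T1 =
     {\<tau>. stopping_time F \<tau> \<and> (\<forall>\<omega>\<in>space M. t \<le> \<tau> \<omega> \<and> \<tau> \<omega> \<le> T1)}"

definition wtilde :: "'a measure \<Rightarrow> (real \<Rightarrow> 'a measure) \<Rightarrow> (real \<Rightarrow> 'a \<Rightarrow> real)
    \<Rightarrow> real \<Rightarrow> real \<Rightarrow> real \<Rightarrow> real \<Rightarrow> real \<Rightarrow> real \<Rightarrow> real \<Rightarrow> real \<Rightarrow> real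
    \<Rightarrow> (real \<Rightarrow> real) \<Rightarrow> real \<Rightarrow> real \<Rightarrow> real \<Rightarrow> real \<Rightarrow> real" where
  "wtilde M F B r mu sg rho muw sigmaw alpha beta gamma K T T1 t z =
     (let k = kappa r mu sg;
          th = vartheta r muw k sigmaw;
          Z = Zproc r mu sg rho muw sigmaw gamma B t z
      in SUP \<tau>\<in>stopping_times_between M F t T1.
           (\<integral>\<omega>. (LINT u:{t..\<tau> \<omega>}|lborel.
                     exp (th * (u - t)) * Vhat (U1 gamma) (muT alpha beta r T) u (Z u \<omega>))
                 + exp (th * (\<tau> \<omega> - t)) *
                   (Vtilde M B r mu sg rho alpha beta gamma K T (\<tau> \<omega>) (Z (\<tau> \<omega>) \<omega>)
                    - qfun th T1 (\<tau> \<omega>))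
             \<partial>Ptilde M B sigmaw k T1))"

end

theory Submission
  imports Defs
begin

lemma gg_bdd:
  fixes k a g :: real
  assumes k: "k > 0" and a: "a > 0" and g: "g > 0" "g \<noteq> 1"
  shows "bdd_above ((\<lambda>c. k * c powr (1-g) / (1-g) - a * c) ` {0<..})"
proof (cases "g > 1")
  case True
  have "k * c powr (1-g) / (1-g) - a * c \<le> 0" if "c > 0" for c
  proof -
    have "k * c powr (1-g) \<ge> 0" using k by simp
    hence "k * c powr (1-g) / (1-g) \<le> 0" using True by (simp add: divide_nonneg_neg)
    moreover have "a * c > 0" using a that by simp
    ultimately show ?thesis by linarith
  qed
  thus ?thesis by (auto intro!: bdd_aboveI[of _ 0])
next
  case False
  hence g1: "g < 1" using g by simp
  define N where "N = (k / (a * (1-g))) powr (1/g)"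
  have Npos: "N > 0" using k a g1 by (simp add: N_def)
  have NG: "N powr g = k / (a * (1-g))" using k a g1 g unfolding N_def by (simp add: powr_powr)
  have "k * c powr (1-g) / (1-g) - a * c \<le> k * N powr (1-g) / (1-g)" if c: "c > 0" for c
  proof (cases "c \<le> N")
    case True
    have "c powr (1-g) \<le> N powr (1-g)" using True c g1 by (intro powr_mono2) auto
    hence "k * c powr (1-g) / (1-g) \<le> k * N powr (1-g) / (1-g)" using k g1
      by (intro divide_right_mono mult_left_mono) auto
    thus ?thesis using a c by (smt (verit) mult_pos_pos)
  next
    case False
    have "c powr g \<ge> N powr g" using False Npos g by (intro powr_mono2) auto
    hence cg: "c powr g \<ge> k / (a * (1-g))" using NG by simp
    have "c powr (1-g) = c / c powr g" using c by (simp add: powr_diff)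
    also have "\<dots> \<le> c / (k / (a * (1-g)))" using cg c k a g1
      by (intro divide_left_mono) auto
    also have "\<dots> = a * (1-g) * c / k" using k by (simp add: field_simps)
    finally have "k * c powr (1-g) \<le> a * (1-g) * c" using k by (simp add: field_simps)
    hence "k * c powr (1-g) / (1-g) \<le> a * c" using g1 by (simp add: field_simps)
    moreover have "k * N powr (1-g) / (1-g) \<ge> 0" using k g1 by simp
    ultimately show ?thesis by simp
  qed
  thus ?thesis by (auto intro!: bdd_aboveI)
qed

lemma gg_scale:
  fixes k a g mu c :: real
  assumes mu: "mu > 0" and c: "c > 0" and g: "g > 0"
  shows "k * c powr (1-g) / (1-g) - (mu*a) * c
     = mu powr ((g-1)/g) * (k * (mu powr (1/g) * c) powr (1-g) / (1-g) - a * (mu powr (1/g) * c))"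
proof -
  have e1: "mu powr ((g-1)/g) * (mu powr (1/g)) powr (1-g) = 1"
    using mu g by (simp add: powr_powr flip: powr_add) (simp add: field_simps)
  have e2: "mu powr ((g-1)/g) * mu powr (1/g) = mu"
    using mu g by (simp flip: powr_add) (simp add: field_simps)
  have "(mu powr (1/g) * c) powr (1-g) = (mu powr (1/g)) powr (1-g) * c powr (1-g)"
    using mu c by (simp add: powr_mult)
  hence "mu powr ((g-1)/g) * (k * (mu powr (1/g) * c) powr (1-g) / (1-g) - a * (mu powr (1/g) * c))
      = (mu powr ((g-1)/g) * (mu powr (1/g)) powr (1-g)) * (k * c powr (1-g)) / (1-g)
        - (mu powr ((g-1)/g) * mu powr (1/g)) * a * c"
    by (simp add: algebra_simps diff_divide_distrib)
  also have "\<dots> = k * c powr (1-g) / (1-g) - (mu*a) * c" using e1 e2 by simp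
  finally show ?thesis by simp
qed

lemma gS_le:
  fixes k a g mu :: real
  assumes k: "k > 0" and a: "a > 0" and g: "g > 0" "g \<noteq> 1" and mu: "mu > 0"
  shows "Sup ((\<lambda>c. k * c powr (1-g) / (1-g) - (mu*a) * c) ` {0<..})
       \<le> mu powr ((g-1)/g) * Sup ((\<lambda>c. k * c powr (1-g) / (1-g) - a * c) ` {0<..})"
proof (rule cSUP_least)
  show "{0<..} \<noteq> ({}::real set)" by auto
  fix c :: real assume "c \<in> {0<..}"
  hence c: "c > 0" by simp
  have "k * (mu powr (1/g) * c) powr (1-g) / (1-g) - a * (mu powr (1/g) * c)
      \<le> Sup ((\<lambda>c. k * c powr (1-g) / (1-g) - a * c) ` {0<..})"
    using gg_bdd[OF k a g] mu c by (intro cSUP_upper) auto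
  hence "mu powr ((g-1)/g) * (k * (mu powr (1/g) * c) powr (1-g) / (1-g) - a * (mu powr (1/g) * c))
      \<le> mu powr ((g-1)/g) * Sup ((\<lambda>c. k * c powr (1-g) / (1-g) - a * c) ` {0<..})"
    using mu by (intro mult_left_mono) auto
  thus "k * c powr (1-g) / (1-g) - (mu*a) * c
      \<le> mu powr ((g-1)/g) * Sup ((\<lambda>c. k * c powr (1-g) / (1-g) - a * c) ` {0<..})"
    using gg_scale[OF mu c g(1), of k a] by simp
qed

lemma gS_hom:
  fixes k a g mu :: real
  assumes k: "k > 0" and a: "a > 0" and g: "g > 0" "g \<noteq> 1" and mu: "mu > 0"
  shows "Sup ((\<lambda>c. k * c powr (1-g) / (1-g) - (mu*a) * c) ` {0<..})
       = mu powr ((g-1)/g) * Sup ((\<lambda>c. k * c powr (1-g) / (1-g) - a * c) ` {0<..})"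
proof (rule antisym)
  show "Sup ((\<lambda>c. k * c powr (1-g) / (1-g) - (mu*a) * c) ` {0<..})
       \<le> mu powr ((g-1)/g) * Sup ((\<lambda>c. k * c powr (1-g) / (1-g) - a * c) ` {0<..})"
    by (rule gS_le[OF assms])
  have ma: "mu * a > 0" using mu a by simp
  have "Sup ((\<lambda>c. k * c powr (1-g) / (1-g) - (inverse mu * (mu*a)) * c) ` {0<..})
     \<le> (inverse mu) powr ((g-1)/g) * Sup ((\<lambda>c. k * c powr (1-g) / (1-g) - (mu*a) * c) ` {0<..})"
    using mu by (intro gS_le[OF k ma g]) auto
  moreover have "inverse mu * (mu*a) = a" using mu by simp
  ultimately have "Sup ((\<lambda>c. k * c powr (1-g) / (1-g) - a * c) ` {0<..})
     \<le> (inverse mu) powr ((g-1)/g) * Sup ((\<lambda>c. k * c powr (1-g) / (1-g) - (mu*a) * c) ` {0<..})"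
    by metis
  hence "mu powr ((g-1)/g) * Sup ((\<lambda>c. k * c powr (1-g) / (1-g) - a * c) ` {0<..})
     \<le> mu powr ((g-1)/g) * ((inverse mu) powr ((g-1)/g) * Sup ((\<lambda>c. k * c powr (1-g) / (1-g) - (mu*a) * c) ` {0<..}))"
    using mu by (intro mult_left_mono) auto
  also have "\<dots> = Sup ((\<lambda>c. k * c powr (1-g) / (1-g) - (mu*a) * c) ` {0<..})"
    using mu by (simp add: inverse_powr)
  finally show "mu powr ((g-1)/g) * Sup ((\<lambda>c. k * c powr (1-g) / (1-g) - a * c) ` {0<..})
     \<le> Sup ((\<lambda>c. k * c powr (1-g) / (1-g) - (mu*a) * c) ` {0<..})" .
qed

lemma gS_sign:
  fixes k a g :: real
  assumes k: "k > 0" and a: "a > 0" and g: "g > 0" "g \<noteq> 1"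
  shows "(g < 1 \<longrightarrow> 0 \<le> Sup ((\<lambda>c. k * c powr (1-g) / (1-g) - a * c) ` {0<..}))
       \<and> (g > 1 \<longrightarrow> Sup ((\<lambda>c. k * c powr (1-g) / (1-g) - a * c) ` {0<..}) \<le> 0)"
proof safe
  assume g1: "g < 1"
  define S where "S = Sup ((\<lambda>c. k * c powr (1-g) / (1-g) - a * c) ` {0<..})"
  have up: "k * c powr (1-g) / (1-g) - a * c \<le> S" if "c > 0" for c
    unfolding S_def using gg_bdd[OF k a g] that by (intro cSUP_upper) auto
  show "0 \<le> S"
  proof (rule ccontr)
    assume "\<not> 0 \<le> S"
    hence S0: "S < 0" by simp
    define c where "c = - S / (2*a)"
    have c: "c > 0" using S0 a by (simp add: c_def field_simps)
    have "k * c powr (1-g) / (1-g) \<ge> 0" using k g1 by simp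
    moreover have "a * c = - S / 2" using a by (simp add: c_def)
    ultimately have "k * c powr (1-g) / (1-g) - a * c > S" using S0 by linarith
    thus False using up[OF c] by linarith
  qed
next
  assume g1: "g > 1"
  show "Sup ((\<lambda>c. k * c powr (1-g) / (1-g) - a * c) ` {0<..}) \<le> 0"
  proof (rule cSUP_least)
    show "{0<..} \<noteq> ({}::real set)" by auto
    fix c :: real assume "c \<in> {0<..}"
    hence c: "c > 0" by simp
    have "k * c powr (1-g) \<ge> 0" using k by simp
    hence "k * c powr (1-g) / (1-g) \<le> 0" using g1 by (simp add: divide_nonneg_neg)
    moreover have "a * c > 0" using a c by simp
    ultimately show "k * c powr (1-g) / (1-g) - a * c \<le> 0" by linarith
  qed
qed

lemma Vhat_form:
  assumes "\<And>c. c > 0 \<Longrightarrow> U t c = k * c powr (1-g) / (1-g)"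
  shows "Vhat U m t y = Sup ((\<lambda>c. k * c powr (1-g) / (1-g) - (y * m t) * c) ` {0<..})"
  unfolding Vhat_def using assms by (intro SUP_cong) auto

lemma Vhat_hom:
  assumes U: "\<And>c. c > 0 \<Longrightarrow> U t c = k * c powr (1-g) / (1-g)"
    and k: "k > 0" and m: "m t > 0" and y: "y > 0" and g: "g > 0" "g \<noteq> 1" and mu: "mu > 0"
  shows "Vhat U m t (mu * y) = mu powr ((g-1)/g) * Vhat U m t y"
proof -
  have "Vhat U m t (mu * y) = Sup ((\<lambda>c. k * c powr (1-g) / (1-g) - (mu * (y * m t)) * c) ` {0<..})"
    using Vhat_form[where U=U and t=t and k=k and g=g, OF U] by (simp add: mult.assoc)
  also have "\<dots> = mu powr ((g-1)/g) * Sup ((\<lambda>c. k * c powr (1-g) / (1-g) - (y * m t) * c) ` {0<..})"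
    using m y by (intro gS_hom[OF k _ g mu]) auto
  also have "\<dots> = mu powr ((g-1)/g) * Vhat U m t y" using Vhat_form[where U=U and t=t and k=k and g=g, OF U] by simp
  finally show ?thesis .
qed

lemma Vhat_sign:
  assumes U: "\<And>c. c > 0 \<Longrightarrow> U t c = k * c powr (1-g) / (1-g)"
    and k: "k > 0" and m: "m t > 0" and y: "y > 0" and g: "g > 0" "g \<noteq> 1"
  shows "(g < 1 \<longrightarrow> 0 \<le> Vhat U m t y) \<and> (g > 1 \<longrightarrow> Vhat U m t y \<le> 0)"
  using gS_sign[OF k _ g, of "y * m t"] m y Vhat_form[where U=U and t=t and k=k and g=g, OF U] by simp

lemma pT_nonneg: "0 \<le> pT alpha beta r T s"
  unfolding pT_def
  by (cases "(\<lambda>u. exp ((alpha - beta - r) * (u - s))) integrable_on {s..T}")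
     (auto intro!: integral_nonneg simp: not_integrable_integral)

lemma muT_pos: "0 < alpha \<Longrightarrow> 0 < muT alpha beta r T s"
  unfolding muT_def using pT_nonneg[of alpha beta r T s]
  by (smt (verit) mult_nonneg_nonneg)

lemma U1_form: "U1 g t c = 1 * c powr (1-g) / (1-g)"
  by (simp add: U1_def)

lemma U2_form: "U2 g K t c = K t * c powr (1-g) / (1-g)"
  by (simp add: U2_def)

lemma set_int_cong_all:
  "(\<And>u. u \<in> A \<Longrightarrow> f u = g u) \<Longrightarrow> set_lebesgue_integral M A f = set_lebesgue_integral M A (g::_\<Rightarrow>real)"
  unfolding set_lebesgue_integral_def by (intro Bochner_Integration.integral_cong) (auto simp: indicator_def)

lemma Yproc_pos: "y > 0 \<Longrightarrow> Yproc rho r k B t y s w > 0"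
  by (simp add: Yproc_def xi_def)

lemma Vtilde_hom:
  assumes g: "g > 0" "g \<noteq> 1" and K: "\<forall>t\<in>{0..T}. 0 < K t" and s: "0 \<le> s"
    and alpha: "alpha > 0" and y: "y > 0" and mu: "mu > 0"
  shows "Vtilde M B r mu0 sg rho alpha beta g K T s (mu * y)
       = mu powr ((g-1)/g) * Vtilde M B r mu0 sg rho alpha beta g K T s y"
proof -
  have H: "\<And>w u. u \<in> {s..T} \<Longrightarrow>
      exp (- rho * (u - s)) * Vhat (U2 g K) (muT alpha beta r T) u (Yproc rho r (kappa r mu0 sg) B s (mu*y) u w)
    = mu powr ((g-1)/g) * (exp (- rho * (u - s)) * Vhat (U2 g K) (muT alpha beta r T) u (Yproc rho r (kappa r mu0 sg) B s y u w))"
  proof -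
    fix w u assume u: "u \<in> {s..T}"
    have Ku: "K u > 0" using K u s by auto
    have "Yproc rho r (kappa r mu0 sg) B s (mu*y) u w = mu * Yproc rho r (kappa r mu0 sg) B s y u w"
      by (simp add: Yproc_def)
    moreover have "Vhat (U2 g K) (muT alpha beta r T) u (mu * Yproc rho r (kappa r mu0 sg) B s y u w)
       = mu powr ((g-1)/g) * Vhat (U2 g K) (muT alpha beta r T) u (Yproc rho r (kappa r mu0 sg) B s y u w)"
      by (rule Vhat_hom[where U="U2 g K" and t=u and k="K u" and g=g, OF U2_form Ku muT_pos[OF alpha] Yproc_pos[OF y] g mu])
    ultimately show "exp (- rho * (u - s)) * Vhat (U2 g K) (muT alpha beta r T) u (Yproc rho r (kappa r mu0 sg) B s (mu*y) u w)
    = mu powr ((g-1)/g) * (exp (- rho * (u - s)) * Vhat (U2 g K) (muT alpha beta r T) u (Yproc rho r (kappa r mu0 sg) B s y u w))"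
      by simp
  qed
  have X: "(LINT u:{s..T}|lborel. exp (- rho * (u - s)) * Vhat (U2 g K) (muT alpha beta r T) u (Yproc rho r (kappa r mu0 sg) B s (mu*y) u w))
     = mu powr ((g-1)/g) * (LINT u:{s..T}|lborel. exp (- rho * (u - s)) * Vhat (U2 g K) (muT alpha beta r T) u (Yproc rho r (kappa r mu0 sg) B s y u w))" for w
  proof -
    have "(LINT u:{s..T}|lborel. exp (- rho * (u - s)) * Vhat (U2 g K) (muT alpha beta r T) u (Yproc rho r (kappa r mu0 sg) B s (mu*y) u w))
     = (LINT u:{s..T}|lborel. mu powr ((g-1)/g) * (exp (- rho * (u - s)) * Vhat (U2 g K) (muT alpha beta r T) u (Yproc rho r (kappa r mu0 sg) B s y u w)))"
      by (rule set_int_cong_all) (rule H)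
    also have "\<dots> = mu powr ((g-1)/g) * (LINT u:{s..T}|lborel. exp (- rho * (u - s)) * Vhat (U2 g K) (muT alpha beta r T) u (Yproc rho r (kappa r mu0 sg) B s y u w))"
      by (rule set_integral_mult_right)
    finally show ?thesis .
  qed
  show ?thesis unfolding Vtilde_def X by simp
qed

lemma Vtilde_sign:
  assumes g: "g > 0" "g \<noteq> 1" and K: "\<forall>t\<in>{0..T}. 0 < K t" and s: "0 \<le> s"
    and alpha: "alpha > 0" and y: "y > 0"
  shows "(g < 1 \<longrightarrow> 0 \<le> Vtilde M B r mu0 sg rho alpha beta g K T s y)
       \<and> (g > 1 \<longrightarrow> Vtilde M B r mu0 sg rho alpha beta g K T s y \<le> 0)"
proof -
  have sg: "(g < 1 \<longrightarrow> 0 \<le> exp (- rho * (u - s)) * Vhat (U2 g K) (muT alpha beta r T) u (Yproc rho r (kappa r mu0 sg) B s y u w))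
     \<and> (g > 1 \<longrightarrow> exp (- rho * (u - s)) * Vhat (U2 g K) (muT alpha beta r T) u (Yproc rho r (kappa r mu0 sg) B s y u w) \<le> 0)"
    if u: "u \<in> {s..T}" for u w
  proof -
    have Ku: "K u > 0" using K u s by auto
    from Vhat_sign[where U="U2 g K" and t=u and k="K u" and g=g, OF U2_form Ku muT_pos[OF alpha] Yproc_pos[OF y, where rho=rho and r=r and k="kappa r mu0 sg" and B=B and t=s and s=u and w=w] g]
    show ?thesis by (auto intro: mult_nonneg_nonneg mult_nonneg_nonpos)
  qed
  show ?thesis
  proof safe
    assume "g < 1"
    thus "0 \<le> Vtilde M B r mu0 sg rho alpha beta g K T s y"
      unfolding Vtilde_def set_lebesgue_integral_def using sg
      by (intro integral_nonneg_AE AE_I2) (auto simp: indicator_def)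
  next
    assume "g > 1"
    hence "0 \<le> - Vtilde M B r mu0 sg rho alpha beta g K T s y"
      unfolding Vtilde_def set_lebesgue_integral_def using sg
      by (simp only: integral_minus[symmetric], intro integral_nonneg_AE AE_I2) (auto simp: indicator_def)
    thus "Vtilde M B r mu0 sg rho alpha beta g K T s y \<le> 0" by simp
  qed
qed

lemma normal_exp_shift:
  fixes sg c0 c1 x :: real
  assumes sg: "sg > 0"
  shows "normal_density 0 sg x * exp (c0 + c1 * x)
       = exp (c0 + c1^2 * sg^2 / 2) * normal_density (c1 * sg^2) sg x"
proof -
  have "-(x - 0)\<^sup>2 / (2 * sg\<^sup>2) + (c0 + c1 * x) = (c0 + c1^2 * sg^2 / 2) + (-(x - c1 * sg^2)\<^sup>2 / (2 * sg\<^sup>2))"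
    using sg by (simp add: field_simps power2_eq_square)
  hence "exp (-(x - 0)\<^sup>2 / (2 * sg\<^sup>2)) * exp (c0 + c1 * x) = exp (c0 + c1^2 * sg^2 / 2) * exp (-(x - c1 * sg^2)\<^sup>2 / (2 * sg\<^sup>2))"
    by (simp flip: exp_add)
  thus ?thesis unfolding normal_density_def by (simp add: algebra_simps)
qed

lemma Ptilde_finite:
  assumes space: "usual_filtered_space M F" and BM: "brownian_motion M F B" and T1: "T1 > 0"
  shows "finite_measure (Ptilde M B sw k T1)"
proof
  define X where "X = (\<lambda>\<omega>. B T1 \<omega> - B 0 \<omega>)"
  define c0 where "c0 = - (1/2) * (sw - k)\<^sup>2 * T1"
  define c1 where "c1 = sw - k"
  define sgm where "sgm = sqrt T1"
  have sgm: "sgm > 0" using T1 by (simp add: sgm_def)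
  have D: "distributed M lborel X (\<lambda>x. ennreal (normal_density 0 sgm x))"
  proof -
    have "\<forall>s u. 0 \<le> s \<and> s < u \<longrightarrow> distributed M lborel (\<lambda>\<omega>. B u \<omega> - B s \<omega>)
          (\<lambda>x. ennreal (normal_density 0 (sqrt (u - s)) x))"
      using BM unfolding brownian_motion_def by blast
    from this[rule_format, of 0 T1] T1 show ?thesis unfolding X_def sgm_def by simp
  qed
  have B0: "\<And>\<omega>. \<omega> \<in> space M \<Longrightarrow> B 0 \<omega> = 0" using BM unfolding brownian_motion_def by auto
  have Xm: "X \<in> borel_measurable M"
    using distributed_measurable[OF D] by (simp add: measurable_lborel1)
  have cE: "\<And>\<omega>. \<omega> \<in> space M \<Longrightarrow> calE sw k B T1 \<omega> = exp (c0 + c1 * X \<omega>)"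
    using B0 by (simp add: calE_def X_def c0_def c1_def)
  have fm: "(\<lambda>\<omega>. ennreal (calE sw k B T1 \<omega>)) \<in> borel_measurable M"
  proof -
    have "(\<lambda>\<omega>. ennreal (exp (c0 + c1 * X \<omega>))) \<in> borel_measurable M" using Xm by measurable
    thus ?thesis by (rule measurable_cong[THEN iffD1, rotated]) (simp add: cE)
  qed
  have "emeasure (Ptilde M B sw k T1) (space (Ptilde M B sw k T1))
      = (\<integral>\<^sup>+ \<omega>. ennreal (calE sw k B T1 \<omega>) * indicator (space M) \<omega> \<partial>M)"
    unfolding Ptilde_def by (simp add: emeasure_density fm)
  also have "\<dots> = (\<integral>\<^sup>+ \<omega>. ennreal (exp (c0 + c1 * X \<omega>)) \<partial>M)"
    by (intro nn_integral_cong) (simp add: cE)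
  also have "\<dots> = (\<integral>\<^sup>+ x. ennreal (normal_density 0 sgm x) * ennreal (exp (c0 + c1 * x)) \<partial>lborel)"
    by (rule distributed_nn_integral[OF D, symmetric]) measurable
  also have "\<dots> = (\<integral>\<^sup>+ x. ennreal (exp (c0 + c1^2 * sgm^2 / 2)) * ennreal (normal_density (c1 * sgm^2) sgm x) \<partial>lborel)"
    by (intro nn_integral_cong) (simp add: normal_exp_shift[OF sgm] ennreal_mult'[symmetric] flip: ennreal_mult)
  also have "\<dots> = ennreal (exp (c0 + c1^2 * sgm^2 / 2)) * (\<integral>\<^sup>+ x. ennreal (normal_density (c1 * sgm^2) sgm x) \<partial>lborel)"
    by (rule nn_integral_cmult) measurable
  also have "(\<integral>\<^sup>+ x. ennreal (normal_density (c1 * sgm^2) sgm x) \<partial>lborel) = 1"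
    using integrable_normal_density[of sgm "c1 * sgm^2"] integral_normal_density[of sgm "c1 * sgm^2"] sgm
    by (subst nn_integral_eq_integral) auto
  finally show "emeasure (Ptilde M B sw k T1) (space (Ptilde M B sw k T1)) \<noteq> \<infinity>" by simp
qed

lemma int_decomp:
  fixes A D :: "'a \<Rightarrow> real"
  assumes D: "integrable N D" and c: "c \<noteq> 0"
  shows "(\<integral>\<omega>. c * A \<omega> + D \<omega> \<partial>N) = c * integral\<^sup>L N A + (if integrable N A then integral\<^sup>L N D else 0)"
proof (cases "integrable N A")
  case True
  thus ?thesis using D by (simp add: integral_add)
next
  case False
  have "\<not> integrable N (\<lambda>\<omega>. c * A \<omega> + D \<omega>)"
  proof
    assume "integrable N (\<lambda>\<omega>. c * A \<omega> + D \<omega>)"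
    hence "integrable N (\<lambda>\<omega>. inverse c * ((c * A \<omega> + D \<omega>) - D \<omega>))"
      using D by (intro integrable_mult_right Bochner_Integration.integrable_diff)
    moreover have "(\<lambda>\<omega>. inverse c * ((c * A \<omega> + D \<omega>) - D \<omega>)) = A" using c by (simp add: field_simps)
    ultimately have "integrable N A" by metis
    thus False using False by simp
  qed
  thus ?thesis using False by (simp add: not_integrable_integral_eq)
qed

lemma powr_term_convex:
  fixes e a d :: real
  assumes "e * (e - 1) * a \<ge> 0"
  shows "convex_on {0<..} (\<lambda>z. z powr e * a + d)"
proof (rule f''_ge0_imp_convex[where f' = "\<lambda>z. e * z powr (e - 1) * a" and f'' = "\<lambda>z. e * ((e - 1) * z powr (e - 1 - 1)) * a"])
  show "convex ({0<..} :: real set)" by simp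
  fix x :: real assume x: "x \<in> {0<..}"
  show "((\<lambda>z. z powr e * a + d) has_real_derivative e * x powr (e - 1) * a) (at x)"
    using x by (auto intro!: derivative_eq_intros)
  show "((\<lambda>z. e * z powr (e - 1) * a) has_real_derivative e * ((e - 1) * x powr (e - 1 - 1)) * a) (at x)"
    using x by (auto intro!: derivative_eq_intros)
  have "0 \<le> (e * (e - 1) * a) * x powr (e - 1 - 1)" using assms by simp
  thus "0 \<le> e * ((e - 1) * x powr (e - 1 - 1)) * a" by (simp add: algebra_simps)
qed

lemma Sup_unbdd_eq:
  fixes X Y :: "real set"
  assumes "\<not> bdd_above X" "\<not> bdd_above Y"
  shows "Sup X = Sup Y"
proof -
  have "(\<lambda>z. \<forall>x\<in>X. x \<le> z) = (\<lambda>z. \<forall>x\<in>Y. x \<le> z)"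
  proof
    fix z
    show "(\<forall>x\<in>X. x \<le> z) = (\<forall>x\<in>Y. x \<le> z)"
      using assms unfolding bdd_above_def by (meson)
  qed
  thus ?thesis by (simp add: Sup_real_def)
qed

lemma sup_family_convex:
  fixes a d :: "'b \<Rightarrow> real" and e C :: real
  assumes S: "S \<noteq> {}" and dC: "\<And>\<tau>. \<tau> \<in> S \<Longrightarrow> \<bar>d \<tau>\<bar> \<le> C"
    and sgn: "(e < 0 \<and> (\<forall>\<tau>\<in>S. a \<tau> \<ge> 0)) \<or> (0 \<le> e \<and> e \<le> 1 \<and> (\<forall>\<tau>\<in>S. a \<tau> \<le> 0))"
  shows "convex_on {0<..} (\<lambda>z. Sup ((\<lambda>\<tau>. z powr e * a \<tau> + d \<tau>) ` S))"
proof -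
  define H where "H = (\<lambda>z. (\<lambda>\<tau>. z powr e * a \<tau> + d \<tau>) ` S)"
  have cv: "convex_on {0<..} (\<lambda>z. z powr e * a \<tau> + d \<tau>)" if "\<tau> \<in> S" for \<tau>
  proof (rule powr_term_convex)
    show "0 \<le> e * (e - 1) * a \<tau>"
      using sgn that
    proof (elim disjE conjE)
      assume "e < 0" "\<forall>\<tau>\<in>S. 0 \<le> a \<tau>"
      hence "e * (e - 1) \<ge> 0" "a \<tau> \<ge> 0" using that by (auto intro: mult_nonpos_nonpos)
      thus ?thesis by simp
    next
      assume "0 \<le> e" "e \<le> 1" "\<forall>\<tau>\<in>S. a \<tau> \<le> 0"
      thus ?thesis using that by (intro mult_nonpos_nonpos mult_nonneg_nonpos) auto
    qed
  qed
  show ?thesis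
  proof (cases "\<forall>z>0. bdd_above (H z)")
    case True
    show ?thesis
    proof (rule convex_onI)
      show "convex ({0<..} :: real set)" by simp
      fix t x y :: real assume t: "t > 0" "t < 1" and x: "x \<in> {0<..}" and y: "y \<in> {0<..}"
      have xy: "(1 - t) *\<^sub>R x + t *\<^sub>R y > 0" using t x y
        by (simp add: add_pos_nonneg)
      show "Sup ((\<lambda>\<tau>. ((1 - t) *\<^sub>R x + t *\<^sub>R y) powr e * a \<tau> + d \<tau>) ` S)
         \<le> (1 - t) * Sup ((\<lambda>\<tau>. x powr e * a \<tau> + d \<tau>) ` S) + t * Sup ((\<lambda>\<tau>. y powr e * a \<tau> + d \<tau>) ` S)"
      proof (rule cSUP_least[OF S])
        fix \<tau> assume tau: "\<tau> \<in> S"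
        have "((1 - t) *\<^sub>R x + t *\<^sub>R y) powr e * a \<tau> + d \<tau>
            \<le> (1 - t) * (x powr e * a \<tau> + d \<tau>) + t * (y powr e * a \<tau> + d \<tau>)"
          using convex_onD[OF cv[OF tau], of t x y] t x y by simp
        also have "\<dots> \<le> (1 - t) * Sup ((\<lambda>\<tau>. x powr e * a \<tau> + d \<tau>) ` S) + t * Sup ((\<lambda>\<tau>. y powr e * a \<tau> + d \<tau>) ` S)"
        proof (intro add_mono mult_left_mono)
          show "x powr e * a \<tau> + d \<tau> \<le> Sup ((\<lambda>\<tau>. x powr e * a \<tau> + d \<tau>) ` S)"
            using True x tau unfolding H_def by (intro cSUP_upper) auto
          show "y powr e * a \<tau> + d \<tau> \<le> Sup ((\<lambda>\<tau>. y powr e * a \<tau> + d \<tau>) ` S)"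
            using True y tau unfolding H_def by (intro cSUP_upper) auto
        qed (use t in auto)
        finally show "((1 - t) *\<^sub>R x + t *\<^sub>R y) powr e * a \<tau> + d \<tau>
         \<le> (1 - t) * Sup ((\<lambda>\<tau>. x powr e * a \<tau> + d \<tau>) ` S) + t * Sup ((\<lambda>\<tau>. y powr e * a \<tau> + d \<tau>) ` S)" .
      qed
    qed
  next
    case False
    then obtain z0 where z0: "z0 > 0" "\<not> bdd_above (H z0)" by auto
    have unb: "\<not> bdd_above (H z)" if z: "z > 0" for z
    proof
      assume "bdd_above (H z)"
      then obtain Mb where Mb: "\<And>\<tau>. \<tau> \<in> S \<Longrightarrow> z powr e * a \<tau> + d \<tau> \<le> Mb"
        unfolding H_def bdd_above_def by auto
      have "bdd_above (H z0)"
        using sgn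
      proof (elim disjE conjE)
        assume e: "e < 0" and apos: "\<forall>\<tau>\<in>S. 0 \<le> a \<tau>"
        have "z0 powr e * a \<tau> + d \<tau> \<le> z0 powr e * ((Mb + C) / z powr e) + C" if tau: "\<tau> \<in> S" for \<tau>
        proof -
          have "z powr e * a \<tau> \<le> Mb + C" using Mb[OF tau] dC[OF tau] by linarith
          hence "a \<tau> \<le> (Mb + C) / z powr e" using z by (simp add: field_simps)
          hence "z0 powr e * a \<tau> \<le> z0 powr e * ((Mb + C) / z powr e)"
            by (intro mult_left_mono) auto
          thus ?thesis using dC[OF tau] by linarith
        qed
        thus ?thesis unfolding H_def by (intro bdd_aboveI) auto
      next
        assume "0 \<le> e" "e \<le> 1" and aneg: "\<forall>\<tau>\<in>S. a \<tau> \<le> 0"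
        have "z0 powr e * a \<tau> + d \<tau> \<le> C" if tau: "\<tau> \<in> S" for \<tau>
        proof -
          have "z0 powr e * a \<tau> \<le> 0" using aneg tau by (simp add: mult_nonneg_nonpos)
          thus ?thesis using dC[OF tau] by linarith
        qed
        thus ?thesis unfolding H_def by (intro bdd_aboveI) auto
      qed
      thus False using z0 by simp
    qed
    have eq: "Sup (H z) = Sup (H z0)" if "z > 0" for z
      using unb[OF that] z0(2) by (rule Sup_unbdd_eq)
    show ?thesis
    proof (rule convex_onI)
      show "convex ({0<..} :: real set)" by simp
      fix t x y :: real assume t: "t > 0" "t < 1" and x: "x \<in> {0<..}" and y: "y \<in> {0<..}"
      have xy: "(1 - t) *\<^sub>R x + t *\<^sub>R y > 0" using t x y
        by (simp add: add_pos_nonneg)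
      have "Sup (H ((1 - t) *\<^sub>R x + t *\<^sub>R y)) \<le> (1 - t) * Sup (H x) + t * Sup (H y)"
        using eq[OF xy] eq[of x] eq[of y] x y by (simp add: algebra_simps)
      thus "Sup ((\<lambda>\<tau>. ((1 - t) *\<^sub>R x + t *\<^sub>R y) powr e * a \<tau> + d \<tau>) ` S)
         \<le> (1 - t) * Sup ((\<lambda>\<tau>. x powr e * a \<tau> + d \<tau>) ` S) + t * Sup ((\<lambda>\<tau>. y powr e * a \<tau> + d \<tau>) ` S)"
        unfolding H_def .
    qed
  qed
qed

lemma D_bound:
  fixes th t s T1 :: real
  assumes th: "th < 0" and s: "t \<le> s" "s \<le> T1"
  shows "\<bar>- (exp (th * (s - t)) * qfun th T1 s)\<bar> \<le> 1 / \<bar>th\<bar>"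
proof -
  have e1: "exp (th * (s - t)) \<le> 1" using th s by (simp add: mult_nonpos_nonneg)
  have e2: "exp (th * (T1 - s)) \<le> 1" using th s by (simp add: mult_nonpos_nonneg)
  have q: "\<bar>qfun th T1 s\<bar> \<le> 1 / \<bar>th\<bar>"
  proof -
    have "\<bar>exp (th * (T1 - s)) - 1\<bar> \<le> 1" using e2 by (smt (verit) exp_gt_zero)
    hence "\<bar>exp (th * (T1 - s)) - 1\<bar> / \<bar>th\<bar> \<le> 1 / \<bar>th\<bar>"
      by (intro divide_right_mono) auto
    thus ?thesis unfolding qfun_def by (simp only: abs_divide)
  qed
  have "\<bar>- (exp (th * (s - t)) * qfun th T1 s)\<bar> = exp (th * (s - t)) * \<bar>qfun th T1 s\<bar>"
    by (simp add: abs_mult)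
  also have "\<dots> \<le> 1 * (1 / \<bar>th\<bar>)" using e1 q by (intro mult_mono) auto
  finally show ?thesis by simp
qed

lemma Zproc_pos: "0 < Zproc r mu sg rho muw sigmaw gamma B t 1 u w"
  unfolding Zproc_def using Yproc_pos[of 1 rho r "kappa r mu sg" B t u w]
  by (simp add: Wproc_def)

lemma Zproc_scale: "Zproc r mu sg rho muw sigmaw gamma B t z u w = z * Zproc r mu sg rho muw sigmaw gamma B t 1 u w"
  unfolding Zproc_def by simp

theorem mainTheorem10:
  fixes M :: "'a measure" and F :: "real \<Rightarrow> 'a measure" and B :: "real \<Rightarrow> 'a \<Rightarrow> real"
    and r mu sg rho muw sigmaw alpha beta gamma T T1 :: real
    and K :: "real \<Rightarrow> real"
  assumes space: "usual_filtered_space M F"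
    and BM: "brownian_motion M F B"
    and T1_pos: "0 < T1" and T1_lt: "T1 < T"
    and pos: "0 < r" "0 < mu" "0 < sg" "0 < rho" "0 < muw" "0 < sigmaw" "0 < alpha" "0 < beta"
    and vartheta_neg: "vartheta r muw (kappa r mu sg) sigmaw < 0"
    and gamma: "0 < gamma" "gamma \<noteq> 1"
    and K_pos: "\<forall>t\<in>{0..T}. 0 < K t"
    and K_smooth: "smooth_on_interval {0..T} K"
    and Delta_bounds: "\<exists>\<delta> Mb. 0 < \<delta> \<and> \<delta> \<le> Mb \<and>
                         (\<forall>t\<in>{0..T1}. - Mb \<le> Delta gamma K t \<and> Delta gamma K t \<le> - \<delta>)"
    and t: "t \<in> {0..T1}"
  shows "convex_on {0<..}
           (\<lambda>z. wtilde M F B r mu sg rho muw sigmaw alpha beta gamma K T T1 t z)"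
proof -
  define k where "k = kappa r mu sg"
  define th where "th = vartheta r muw k sigmaw"
  define e where "e = (gamma - 1) / gamma"
  define P where "P = Ptilde M B sigmaw k T1"
  define S where "S = stopping_times_between M F t T1"
  define R where "R = (\<lambda>u w. Zproc r mu sg rho muw sigmaw gamma B t 1 u w)"
  define A where "A = (\<lambda>(\<tau>::'a \<Rightarrow> real) w. (LINT u:{t..\<tau> w}|lborel. exp (th * (u - t)) * Vhat (U1 gamma) (muT alpha beta r T) u (R u w))
      + exp (th * (\<tau> w - t)) * Vtilde M B r mu sg rho alpha beta gamma K T (\<tau> w) (R (\<tau> w) w))"
  define Dd where "Dd = (\<lambda>(\<tau>::'a \<Rightarrow> real) w. - (exp (th * (\<tau> w - t)) * qfun th T1 (\<tau> w)))"
  define a where "a = (\<lambda>\<tau>. integral\<^sup>L P (A \<tau>))"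
  define d where "d = (\<lambda>\<tau>. if integrable P (A \<tau>) then integral\<^sup>L P (Dd \<tau>) else 0)"
  have th: "th < 0" using vartheta_neg by (simp add: th_def k_def)
  have t0: "0 \<le> t" "t \<le> T1" using t by auto
  have Rpos: "\<And>u w. R u w > 0" unfolding R_def by (rule Zproc_pos)
  have fm: "finite_measure P" unfolding P_def by (rule Ptilde_finite[OF space BM T1_pos])
  have spP: "space P = space M" unfolding P_def Ptilde_def by simp
  have setsP: "sets P = sets M" unfolding P_def Ptilde_def by simp
  have filt: "filtration (space M) F" and Fsub: "\<And>s. sets (F s) \<subseteq> sets M"
    using space unfolding usual_filtered_space_def by auto
  have spF: "\<And>s. space (F s) = space M" using filt by (rule filtration.space_F)
  have Snonempty: "S \<noteq> {}"
    unfolding S_def stopping_times_between_def using t0 stopping_time_const[of F t] by auto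
  have tauS: "stopping_time F \<tau> \<and> (\<forall>w\<in>space M. t \<le> \<tau> w \<and> \<tau> w \<le> T1)" if "\<tau> \<in> S" for \<tau>
    using that unfolding S_def stopping_times_between_def by auto
  have taumeas: "\<tau> \<in> borel_measurable P" if "\<tau> \<in> S" for \<tau>
  proof -
    have "\<tau> \<in> borel_measurable M"
      using tauS[OF that] Fsub spF by (intro measurable_stopping_time[where F=F]) auto
    thus ?thesis by (simp add: measurable_cong_sets[OF setsP refl])
  qed
  define Cb where "Cb = 1 / \<bar>th\<bar>"
  have Dbound: "\<bar>Dd \<tau> w\<bar> \<le> Cb" if "\<tau> \<in> S" "w \<in> space M" for \<tau> w
    unfolding Dd_def Cb_def using tauS[OF that(1)] that(2) th by (intro D_bound) auto
  have Dint: "integrable P (Dd \<tau>)" if tau: "\<tau> \<in> S" for \<tau>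
  proof (rule finite_measure.integrable_const_bound[OF fm, where B=Cb])
    show "AE x in P. norm (Dd \<tau> x) \<le> Cb" using Dbound[OF tau] by (intro AE_I2) (auto simp: spP)
    have [measurable]: "\<tau> \<in> borel_measurable P" by (rule taumeas[OF tau])
    show "Dd \<tau> \<in> borel_measurable P" unfolding Dd_def qfun_def by measurable
  qed
  define C where "C = Cb * measure P (space P)"
  have dC: "\<bar>d \<tau>\<bar> \<le> C" if tau: "\<tau> \<in> S" for \<tau>
  proof (cases "integrable P (A \<tau>)")
    case True
    have Dle: "Dd \<tau> w \<le> Cb" "- Cb \<le> Dd \<tau> w" if "w \<in> space M" for w
      using Dbound[OF tau that] by (auto simp: abs_le_iff)
    have i1: "integral\<^sup>L P (Dd \<tau>) \<le> integral\<^sup>L P (\<lambda>_. Cb)"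
      using Dint[OF tau] Dle fm
      by (intro integral_mono) (auto simp: spP finite_measure.integrable_const)
    have i2: "integral\<^sup>L P (\<lambda>_. - Cb) \<le> integral\<^sup>L P (Dd \<tau>)"
      using Dint[OF tau] Dle fm
      by (intro integral_mono) (auto simp: spP finite_measure.integrable_const)
    show ?thesis using i1 i2 True unfolding d_def C_def by (simp add: abs_le_iff mult.commute)
  next
    case False
    have "0 \<le> Cb" unfolding Cb_def by simp
    hence "0 \<le> C" unfolding C_def by simp
    thus ?thesis using False unfolding d_def by simp
  qed
  have gpos: "gamma > 0" "gamma \<noteq> 1" using gamma by auto
  have U1f: "\<And>u c. U1 gamma u c = 1 * c powr (1-gamma) / (1-gamma)" by (rule U1_form)
  have Vh1: "Vhat (U1 gamma) (muT alpha beta r T) u (z * y) = z powr e * Vhat (U1 gamma) (muT alpha beta r T) u y"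
    if "z > 0" "y > 0" for z y u
    unfolding e_def
    by (rule Vhat_hom[where U="U1 gamma" and t=u and k=1 and g=gamma, OF U1f _ muT_pos[OF pos(7)] that(2) gpos that(1)]) simp
  have integrand: "(LINT u:{t..\<tau> w}|lborel. exp (th * (u - t)) * Vhat (U1 gamma) (muT alpha beta r T) u (Zproc r mu sg rho muw sigmaw gamma B t z u w))
                 + exp (th * (\<tau> w - t)) *
                   (Vtilde M B r mu sg rho alpha beta gamma K T (\<tau> w) (Zproc r mu sg rho muw sigmaw gamma B t z (\<tau> w) w)
                    - qfun th T1 (\<tau> w))
      = z powr e * A \<tau> w + Dd \<tau> w" if z: "z > 0" and tau: "\<tau> \<in> S" and w: "w \<in> space M" for z \<tau> w
  proof -
    have tw: "t \<le> \<tau> w" using tauS[OF tau] w by auto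
    have L: "(LINT u:{t..\<tau> w}|lborel. exp (th * (u - t)) * Vhat (U1 gamma) (muT alpha beta r T) u (Zproc r mu sg rho muw sigmaw gamma B t z u w))
      = z powr e * (LINT u:{t..\<tau> w}|lborel. exp (th * (u - t)) * Vhat (U1 gamma) (muT alpha beta r T) u (R u w))"
    proof -
      have "(LINT u:{t..\<tau> w}|lborel. exp (th * (u - t)) * Vhat (U1 gamma) (muT alpha beta r T) u (Zproc r mu sg rho muw sigmaw gamma B t z u w))
        = (LINT u:{t..\<tau> w}|lborel. z powr e * (exp (th * (u - t)) * Vhat (U1 gamma) (muT alpha beta r T) u (R u w)))"
        by (rule set_int_cong_all) (simp add: Zproc_scale R_def[symmetric] Vh1[OF z Rpos])
      also have "\<dots> = z powr e * (LINT u:{t..\<tau> w}|lborel. exp (th * (u - t)) * Vhat (U1 gamma) (muT alpha beta r T) u (R u w))"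
        by (rule set_integral_mult_right)
      finally show ?thesis .
    qed
    have V: "Vtilde M B r mu sg rho alpha beta gamma K T (\<tau> w) (Zproc r mu sg rho muw sigmaw gamma B t z (\<tau> w) w)
      = z powr e * Vtilde M B r mu sg rho alpha beta gamma K T (\<tau> w) (R (\<tau> w) w)"
      unfolding e_def Zproc_scale R_def[symmetric]
      using t0 tw by (intro Vtilde_hom[OF gpos K_pos _ pos(7) Rpos z]) auto
    show ?thesis unfolding L V A_def Dd_def by (simp add: algebra_simps)
  qed
  have wt: "wtilde M F B r mu sg rho muw sigmaw alpha beta gamma K T T1 t z
       = Sup ((\<lambda>\<tau>. z powr e * a \<tau> + d \<tau>) ` S)" if z: "z > 0" for z
  proof -
    have "wtilde M F B r mu sg rho muw sigmaw alpha beta gamma K T T1 t z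
       = Sup ((\<lambda>\<tau>. \<integral>w. z powr e * A \<tau> w + Dd \<tau> w \<partial>P) ` S)"
      unfolding wtilde_def Let_def k_def[symmetric] th_def[symmetric] P_def[symmetric] S_def[symmetric]
      by (intro SUP_cong refl Bochner_Integration.integral_cong) (simp_all add: integrand[OF z] spP)
    also have "\<dots> = Sup ((\<lambda>\<tau>. z powr e * a \<tau> + d \<tau>) ` S)"
      using z unfolding a_def d_def by (intro SUP_cong refl int_decomp Dint) auto
    finally show ?thesis .
  qed
  have Anonneg: "(gamma < 1 \<longrightarrow> 0 \<le> A \<tau> w) \<and> (gamma > 1 \<longrightarrow> A \<tau> w \<le> 0)"
    if tau: "\<tau> \<in> S" and w: "w \<in> space M" for \<tau> w
  proof -
    have tw: "t \<le> \<tau> w" using tauS[OF tau] w by auto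
    have Vs: "(gamma < 1 \<longrightarrow> 0 \<le> Vhat (U1 gamma) (muT alpha beta r T) u (R u w)) \<and>
              (gamma > 1 \<longrightarrow> Vhat (U1 gamma) (muT alpha beta r T) u (R u w) \<le> 0)" for u
      by (rule Vhat_sign[where U="U1 gamma" and t=u and k=1 and g=gamma, OF U1f _ muT_pos[OF pos(7)] Rpos gpos]) simp
    have Ts: "(gamma < 1 \<longrightarrow> 0 \<le> Vtilde M B r mu sg rho alpha beta gamma K T (\<tau> w) (R (\<tau> w) w)) \<and>
              (gamma > 1 \<longrightarrow> Vtilde M B r mu sg rho alpha beta gamma K T (\<tau> w) (R (\<tau> w) w) \<le> 0)"
      using t0 tw by (intro Vtilde_sign[OF gpos K_pos _ pos(7) Rpos]) auto
    show ?thesis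
    proof safe
      assume g1: "gamma < 1"
      have "0 \<le> (LINT u:{t..\<tau> w}|lborel. exp (th * (u - t)) * Vhat (U1 gamma) (muT alpha beta r T) u (R u w))"
        unfolding set_lebesgue_integral_def using Vs g1
        by (intro integral_nonneg_AE AE_I2) (auto simp: indicator_def)
      moreover have "0 \<le> exp (th * (\<tau> w - t)) * Vtilde M B r mu sg rho alpha beta gamma K T (\<tau> w) (R (\<tau> w) w)"
        using Ts g1 by simp
      ultimately show "0 \<le> A \<tau> w" unfolding A_def by simp
    next
      assume g1: "gamma > 1"
      have "0 \<le> (LINT u:{t..\<tau> w}|lborel. - (exp (th * (u - t)) * Vhat (U1 gamma) (muT alpha beta r T) u (R u w)))"
        unfolding set_lebesgue_integral_def using Vs g1
        by (intro integral_nonneg_AE AE_I2) (auto simp: indicator_def mult_nonneg_nonpos)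
      hence "(LINT u:{t..\<tau> w}|lborel. exp (th * (u - t)) * Vhat (U1 gamma) (muT alpha beta r T) u (R u w)) \<le> 0"
        unfolding set_lebesgue_integral_def by simp
      moreover have "exp (th * (\<tau> w - t)) * Vtilde M B r mu sg rho alpha beta gamma K T (\<tau> w) (R (\<tau> w) w) \<le> 0"
        using Ts g1 by (simp add: mult_nonneg_nonpos)
      ultimately show "A \<tau> w \<le> 0" unfolding A_def by simp
    qed
  qed
  have sgn: "(e < 0 \<and> (\<forall>\<tau>\<in>S. a \<tau> \<ge> 0)) \<or> (0 \<le> e \<and> e \<le> 1 \<and> (\<forall>\<tau>\<in>S. a \<tau> \<le> 0))"
  proof (cases "gamma < 1")
    case True
    have "e < 0" unfolding e_def using True gpos by (simp add: divide_neg_pos)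
    moreover have "a \<tau> \<ge> 0" if "\<tau> \<in> S" for \<tau>
      unfolding a_def using Anonneg[OF that] True by (intro integral_nonneg_AE AE_I2) (auto simp: spP)
    ultimately show ?thesis by auto
  next
    case False
    hence g1: "gamma > 1" using gpos by simp
    have "0 \<le> e" "e \<le> 1" unfolding e_def using g1 by auto
    moreover have "a \<tau> \<le> 0" if "\<tau> \<in> S" for \<tau>
    proof -
      have "0 \<le> integral\<^sup>L P (\<lambda>w. - A \<tau> w)"
        using Anonneg[OF that] g1 by (intro integral_nonneg_AE AE_I2) (auto simp: spP)
      thus ?thesis unfolding a_def by simp
    qed
    ultimately show ?thesis by auto
  qed
  have cv: "convex_on {0<..} (\<lambda>z. Sup ((\<lambda>\<tau>. z powr e * a \<tau> + d \<tau>) ` S))"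
    by (rule sup_family_convex[OF Snonempty dC sgn])
  show ?thesis
  proof (rule convex_onI)
    show "convex ({0<..} :: real set)" by simp
    fix u x y :: real assume u: "u > 0" "u < 1" and x: "x \<in> {0<..}" and y: "y \<in> {0<..}"
    have xy: "(1 - u) *\<^sub>R x + u *\<^sub>R y > 0" using u x y by (simp add: add_pos_nonneg)
    show "wtilde M F B r mu sg rho muw sigmaw alpha beta gamma K T T1 t ((1 - u) *\<^sub>R x + u *\<^sub>R y)
        \<le> (1 - u) * wtilde M F B r mu sg rho muw sigmaw alpha beta gamma K T T1 t x
          + u * wtilde M F B r mu sg rho muw sigmaw alpha beta gamma K T T1 t y"
      using convex_onD[OF cv, of u x y] u x y unfolding wt[OF xy] by (simp add: wt)
  qed
qed

end
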